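(* Let $f:[0,1]^n \to \mathbb{R}_+$ be a differentiable DR-submodular function and $\vec{x}^* \in [0,1]^n$ a maximizer of $f$. Consider a differentiable trajectory $(\vec{x}^{(t)},\vec{y}^{(t)})$ with $\vec{x}^{(t)} \le \vec{y}^{(t)}$ that follows the update rule: for every $t$ and every coordinate $i$ with $\nabla_i f(\vec{x}^{(t)}) > 0$ and $\nabla_i f(\vec{y}^{(t)}) < 0$, $$\dot{x}^{(t)}_i = \frac{\nabla_i f(\vec{x}^{(t)})}{\nabla_i f(\vec{x}^{(t)}) - \nabla_i f(\vec{y}^{(t)})}, \qquad \dot{y}^{(t)}_i = \frac{\nabla_i f(\vec{y}^{(t)})}{\nabla_i f(\vec{x}^{(t)}) - \nabla_i f(\vec{y}^{(t)})},$$ and $\dot{x}^{(t)}_i = \dot{y}^{(t)}_i = 0$ for every other coordinate $i$. Let $\vec{p}^{(t)}$ be the projection of $\vec{x}^*$ onto the box $[\vec{x}^{(t)},\vec{y}^{(t)}]$, i.e. $p^{(t)}_i = \min\{\max\{x^*_i, x^{(t)}_i\}, y^{(t)}_i\}$. Then at every time $t$ (where the derivatives exist) $$\frac12\left(\langle \nabla f(\vec{x}^{(t)}), \dot{\vec{x}}^{(t)}\rangle + \langle \nabla f(\vec{y}^{(t)}), \dot{\vec{y}}^{(t)}\rangle\right) + \langle \nabla f(\vec{p}^{(t)}), \dot{\vec{p}}^{(t)}\rangle \ge 0.$$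
   Context: A function $f:[0,1]^n \to \mathbb{R}_+$ is DR-submodular if for all $\vec{x}\le\vec{y}$ in $[0,1]^n$ (coordinate-wise), all $i\in[n]$ and $\delta\in[0,1]$ with $\vec{x}+\delta\vec{1}_{\{i\}}, \vec{y}+\delta\vec{1}_{\{i\}} \in [0,1]^n$, $f(\vec{x}+\delta\vec{1}_{\{i\}})-f(\vec{x}) \ge f(\vec{y}+\delta\vec{1}_{\{i\}})-f(\vec{y})$. For differentiable $f$ this is equivalent to $\nabla f(\vec{x}) \ge \nabla f(\vec{y})$ whenever $\vec{x}\le\vec{y}$. Dots denote time derivatives. *)

theory Defs
  imports "HOL-Analysis.Analysis"
begin

definition dr_submodular :: "(real^'n \<Rightarrow> real) \<Rightarrow> bool" where
  "dr_submodular f \<longleftrightarrow>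
     (\<forall>x y i \<delta>. x \<in> cbox 0 1 \<and> y \<in> cbox 0 1 \<and> x \<le> y \<and> \<delta> \<in> {0..1} \<and>
        x + axis i \<delta> \<in> cbox 0 1 \<and> y + axis i \<delta> \<in> cbox 0 1 \<longrightarrow>
        f (x + axis i \<delta>) - f x \<ge> f (y + axis i \<delta>) - f y)"

definition box_proj :: "real^'n \<Rightarrow> real^'n \<Rightarrow> real^'n \<Rightarrow> real^'n" where
  "box_proj z a b = (\<chi> i. min (max (z $ i) (a $ i)) (b $ i))"

end

theory Submission
  imports Defs
begin

lemma dir_lim:
  fixes f :: "real^'n \<Rightarrow> real"
  assumes fd: "(f has_derivative (\<lambda>h. g \<bullet> h)) (at z within S)" and d: "d > 0"
    and zS: "z \<in> S" and inS: "\<forall>\<delta>\<in>{0..d}. z + \<delta> *\<^sub>R v \<in> S"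
  shows "((\<lambda>\<delta>. (f (z + \<delta> *\<^sub>R v) - f z) / \<delta>) \<longlongrightarrow> g \<bullet> v) (at_right 0)"
proof -
  have 1: "((\<lambda>\<delta>. z + \<delta> *\<^sub>R v) has_derivative (\<lambda>\<delta>. \<delta> *\<^sub>R v)) (at 0 within {0..d})"
    by (auto intro!: derivative_eq_intros)
  have 2: "(f has_derivative (\<lambda>h. g \<bullet> h)) (at ((\<lambda>\<delta>. z + \<delta> *\<^sub>R v) 0) within ((\<lambda>\<delta>. z + \<delta> *\<^sub>R v) ` {0..d}))"
    using inS by (auto intro!: has_derivative_subset[OF fd])
  have "((\<lambda>\<delta>. f (z + \<delta> *\<^sub>R v)) has_derivative (\<lambda>\<delta>. g \<bullet> (\<delta> *\<^sub>R v))) (at 0 within {0..d})"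
    using has_derivative_in_compose[OF 1 2] by simp
  moreover have "(\<lambda>\<delta>. g \<bullet> (\<delta> *\<^sub>R v)) = (*) (g \<bullet> v)" by (auto simp: mult.commute)
  ultimately have "((\<lambda>\<delta>. f (z + \<delta> *\<^sub>R v)) has_field_derivative (g \<bullet> v)) (at 0 within {0..d})"
    by (simp add: has_field_derivative_def)
  then have "((\<lambda>\<delta>. (f (z + \<delta> *\<^sub>R v) - f (z + 0 *\<^sub>R v)) / (\<delta> - 0)) \<longlongrightarrow> g \<bullet> v) (at 0 within {0..d})"
    unfolding has_field_derivative_iff .
  then show ?thesis using at_within_Icc_at_right[OF d] by simp
qed

lemma axis_eq: "axis i (\<delta>::real) = \<delta> *\<^sub>R axis i 1"
  by (simp add: axis_def vec_eq_iff)

lemma grad_mono: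
  fixes f :: "real^'n \<Rightarrow> real"
  assumes diff: "\<forall>z\<in>cbox 0 1. (f has_derivative (\<lambda>h. gradf z \<bullet> h)) (at z within cbox 0 1)"
    and dr: "dr_submodular f"
    and a: "a \<in> cbox 0 1" and b: "b \<in> cbox 0 1" and ab: "a \<le> b"
  shows "gradf b $ i \<le> gradf a $ i"
proof -
  let ?e = "axis i (1::real)"
  have ga: "gradf a \<bullet> ?e = gradf a $ i" and gb: "gradf b \<bullet> ?e = gradf b $ i"
    by (simp_all add: inner_axis)
  have gan: "gradf a \<bullet> (-?e) = - gradf a $ i" and gbn: "gradf b \<bullet> (-?e) = - gradf b $ i"
    by (simp_all add: inner_axis)
  have ai: "0 \<le> a $ i" "a $ i \<le> 1" and bi: "0 \<le> b $ i" "b $ i \<le> 1" and abi: "a $ i \<le> b $ i"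
    using a b ab by (auto simp: mem_box_cart less_eq_vec_def)
  have inbox_p: "z + \<delta> *\<^sub>R ?e \<in> cbox 0 1 \<longleftrightarrow> (0 \<le> z $ i + \<delta> \<and> z $ i + \<delta> \<le> 1)"
    if "z \<in> cbox 0 1" for z \<delta>
    using that unfolding mem_box_cart by (auto simp: axis_def)
  have inbox_m: "z - \<delta> *\<^sub>R ?e \<in> cbox 0 1 \<longleftrightarrow> (0 \<le> z $ i - \<delta> \<and> z $ i - \<delta> \<le> 1)"
    if "z \<in> cbox 0 1" for z \<delta>
    using that unfolding mem_box_cart by (auto simp: axis_def)
  note inbox = inbox_p inbox_m
  have drI: "f (xx + \<delta> *\<^sub>R ?e) - f xx \<ge> f (yy + \<delta> *\<^sub>R ?e) - f yy"
    if "xx \<in> cbox 0 1" "yy \<in> cbox 0 1" "xx \<le> yy" "0 \<le> \<delta>" "\<delta> \<le> 1"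
       "xx + \<delta> *\<^sub>R ?e \<in> cbox 0 1" "yy + \<delta> *\<^sub>R ?e \<in> cbox 0 1" for xx yy \<delta>
    using dr that unfolding dr_submodular_def axis_eq[of i \<delta>, symmetric] by auto
  have ev: "eventually (\<lambda>\<delta>. 0 < \<delta> \<and> \<delta> < d) (at_right (0::real))" if "d > 0" for d
    using that by (auto simp: eventually_at_right_field)
  consider "a $ i < b $ i" | "a $ i = b $ i" "a $ i < 1" | "a $ i = 1" "b $ i = 1"
    using abi ai bi by linarith
  then show ?thesis
  proof cases
    case 1
    define d where "d = b $ i - a $ i"
    have d: "d > 0" "d \<le> 1" using 1 ai bi by (auto simp: d_def)
    have la: "((\<lambda>\<delta>. (f (a + \<delta> *\<^sub>R ?e) - f a) / \<delta>) \<longlongrightarrow> gradf a \<bullet> ?e) (at_right 0)"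
      using diff a d by (intro dir_lim[where S="cbox 0 1" and d=d]) (use ai bi in \<open>auto simp: inbox d_def\<close>)
    have lb: "((\<lambda>\<delta>. (f (b + \<delta> *\<^sub>R (-?e)) - f b) / \<delta>) \<longlongrightarrow> gradf b \<bullet> (-?e)) (at_right 0)"
      using diff b d by (intro dir_lim[where S="cbox 0 1" and d=d]) (use ai bi in \<open>auto simp: inbox d_def\<close>)
    have "eventually (\<lambda>\<delta>. - ((f (b + \<delta> *\<^sub>R (-?e)) - f b) / \<delta>) \<le> (f (a + \<delta> *\<^sub>R ?e) - f a) / \<delta>) (at_right 0)"
      using ev[OF d(1)]
    proof eventually_elim
      case (elim \<delta>)
      let ?y = "b + \<delta> *\<^sub>R (-?e)"
      have "f (a + \<delta> *\<^sub>R ?e) - f a \<ge> f (?y + \<delta> *\<^sub>R ?e) - f ?y"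
      proof (rule drI)
        show "?y \<in> cbox 0 1" using elim b d ai bi ai bi by (auto simp: inbox d_def)
        show "a \<le> ?y" using elim ab by (auto simp: less_eq_vec_def axis_def d_def)
        show "a + \<delta> *\<^sub>R ?e \<in> cbox 0 1" using elim a d bi ai bi by (auto simp: inbox d_def)
        show "?y + \<delta> *\<^sub>R ?e \<in> cbox 0 1" using b by simp
      qed (use elim a d in auto)
      then have "- (f (b + \<delta> *\<^sub>R (-?e)) - f b) \<le> f (a + \<delta> *\<^sub>R ?e) - f a" by simp
      then have "(f b - f (b - \<delta> *\<^sub>R ?e)) / \<delta> \<le> (f (a + \<delta> *\<^sub>R ?e) - f a) / \<delta>"
        using elim by (intro divide_right_mono) auto
      moreover have "- ((f (b - \<delta> *\<^sub>R ?e) - f b) / \<delta>) = (f b - f (b - \<delta> *\<^sub>R ?e)) / \<delta>"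
        by (metis minus_diff_eq minus_divide_left)
      ultimately show ?case by simp
    qed
    from tendsto_le[OF trivial_limit_at_right_real la tendsto_minus[OF lb] this]
    show ?thesis using ga gbn by simp
  next
    case 2
    define d where "d = 1 - a $ i"
    have d: "d > 0" "d \<le> 1" using 2 ai bi by (auto simp: d_def)
    have la: "((\<lambda>\<delta>. (f (a + \<delta> *\<^sub>R ?e) - f a) / \<delta>) \<longlongrightarrow> gradf a \<bullet> ?e) (at_right 0)"
      using diff a d by (intro dir_lim[where S="cbox 0 1" and d=d]) (use ai bi in \<open>auto simp: inbox d_def\<close>)
    have lb: "((\<lambda>\<delta>. (f (b + \<delta> *\<^sub>R ?e) - f b) / \<delta>) \<longlongrightarrow> gradf b \<bullet> ?e) (at_right 0)"
      using diff b d 2 by (intro dir_lim[where S="cbox 0 1" and d=d]) (use ai bi in \<open>auto simp: inbox d_def\<close>)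
    have "eventually (\<lambda>\<delta>. (f (b + \<delta> *\<^sub>R ?e) - f b) / \<delta> \<le> (f (a + \<delta> *\<^sub>R ?e) - f a) / \<delta>) (at_right 0)"
      using ev[OF d(1)]
    proof eventually_elim
      case (elim \<delta>)
      have "f (a + \<delta> *\<^sub>R ?e) - f a \<ge> f (b + \<delta> *\<^sub>R ?e) - f b"
      proof (rule drI)
        show "a + \<delta> *\<^sub>R ?e \<in> cbox 0 1" using elim a d ai ai bi by (auto simp: inbox d_def)
        show "b + \<delta> *\<^sub>R ?e \<in> cbox 0 1" using elim b d 2 ai bi by (auto simp: inbox d_def)
      qed (use elim a b ab d in auto)
      then show ?case using elim by (simp add: divide_right_mono)
    qed
    from tendsto_le[OF trivial_limit_at_right_real la lb this]
    show ?thesis using ga gb by simp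
  next
    case 3
    define d where "d = (1::real)"
    have d: "d > 0" "d \<le> 1" by (auto simp: d_def)
    have la: "((\<lambda>\<delta>. (f (a + \<delta> *\<^sub>R (-?e)) - f a) / \<delta>) \<longlongrightarrow> gradf a \<bullet> (-?e)) (at_right 0)"
      using diff a d 3 by (intro dir_lim[where S="cbox 0 1" and d=d]) (use ai bi in \<open>auto simp: inbox d_def\<close>)
    have lb: "((\<lambda>\<delta>. (f (b + \<delta> *\<^sub>R (-?e)) - f b) / \<delta>) \<longlongrightarrow> gradf b \<bullet> (-?e)) (at_right 0)"
      using diff b d 3 by (intro dir_lim[where S="cbox 0 1" and d=d]) (use ai bi in \<open>auto simp: inbox d_def\<close>)
    have "eventually (\<lambda>\<delta>. (f (a + \<delta> *\<^sub>R (-?e)) - f a) / \<delta> \<le> (f (b + \<delta> *\<^sub>R (-?e)) - f b) / \<delta>) (at_right 0)"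
      using ev[OF d(1)]
    proof eventually_elim
      case (elim \<delta>)
      let ?x = "a + \<delta> *\<^sub>R (-?e)" and ?y = "b + \<delta> *\<^sub>R (-?e)"
      have "f (?x + \<delta> *\<^sub>R ?e) - f ?x \<ge> f (?y + \<delta> *\<^sub>R ?e) - f ?y"
      proof (rule drI)
        show "?x \<in> cbox 0 1" using elim a d 3 ai bi by (auto simp: inbox d_def)
        show "?y \<in> cbox 0 1" using elim b d 3 ai bi by (auto simp: inbox d_def)
        show "?x \<le> ?y" using ab by (auto simp: less_eq_vec_def axis_def)
      qed (use elim a b d in \<open>auto simp: d_def\<close>)
      then show ?case using elim by (simp add: divide_right_mono)
    qed
    from tendsto_le[OF trivial_limit_at_right_real lb la this]
    show ?thesis using gan gbn by simp
  qed
qed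
lemma comp_lim:
  fixes h :: "real \<Rightarrow> real^'n"
  assumes "(h has_vector_derivative h') (at t)"
  shows "((\<lambda>s. (h s $ i - h t $ i) / (s - t)) \<longlongrightarrow> h' $ i) (at_right t)"
proof -
  have "((\<lambda>s. h s $ i) has_vector_derivative h' $ i) (at t)"
    by (rule bounded_linear.has_vector_derivative[OF bounded_linear_vec_nth assms])
  then have "((\<lambda>s. h s $ i) has_real_derivative h' $ i) (at t within UNIV)"
    by (simp add: has_real_derivative_iff_has_vector_derivative)
  then have "((\<lambda>s. (h s $ i - h t $ i) / (s - t)) \<longlongrightarrow> h' $ i) (at t within UNIV)"
    unfolding has_field_derivative_iff .
  then show ?thesis by (rule tendsto_mono[OF at_le, rotated]) auto
qed

lemma clamp_lo:
  fixes z a b a2 b2 :: real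
  shows "min (min (a2 - a) (b2 - b)) 0 \<le> min (max z a2) b2 - min (max z a) b"
  by (auto simp: min_def max_def)

lemma clamp_hi:
  fixes z a b a2 b2 :: real
  shows "min (max z a2) b2 - min (max z a) b \<le> max (max (a2 - a) (b2 - b)) 0"
  by (auto simp: min_def max_def)

lemma div_lo:
  fixes u v w h :: real
  assumes "min (min u v) 0 \<le> w" "h > 0"
  shows "min (min (u/h) (v/h)) 0 \<le> w/h"
  using assms by (auto simp: min_le_iff_disj divide_right_mono)

lemma div_hi:
  fixes u v w h :: real
  assumes "w \<le> max (max u v) 0" "h > 0"
  shows "w/h \<le> max (max (u/h) (v/h)) 0"
  using assms by (auto simp: le_max_iff_disj divide_right_mono divide_le_0_iff)

lemma coord:
  fixes A B G P X Y :: real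
  assumes r: "if A > 0 \<and> B < 0 then X = A/(A-B) \<and> Y = B/(A-B) else X = 0 \<and> Y = 0"
    and g: "B \<le> G" "G \<le> A"
    and plo: "min (min X Y) 0 \<le> P" and phi: "P \<le> max (max X Y) 0"
  shows "0 \<le> 1/2 * (A*X + B*Y) + G*P"
proof (cases "A > 0 \<and> B < 0")
  case True
  define D where "D = A - B"
  have D: "D > 0" using True by (simp add: D_def)
  have X: "X = A/D" and Y: "Y = B/D" using r True by (auto simp: D_def)
  have "X > 0" "Y < 0" using True D by (auto simp: X Y divide_pos_pos divide_neg_pos)
  then have PY: "Y \<le> P" "P \<le> X" using plo phi by auto
  define V where "V = P * D"
  have V: "B \<le> V" "V \<le> A"
    using PY D by (auto simp: V_def X Y field_simps)
  have GV: "A * B \<le> G * V"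
  proof (cases "0 \<le> G")
    case True
    show ?thesis
    proof (cases "0 \<le> V")
      case True with \<open>0 \<le> G\<close> show ?thesis using \<open>A > 0 \<and> B < 0\<close>
        by (smt (verit) mult_nonneg_nonneg mult_pos_neg)
    next
      case False
      have "G * V \<ge> A * V" using g False by (intro mult_right_mono_neg) auto
      moreover have "A * V \<ge> A * B" using V True \<open>A > 0 \<and> B < 0\<close> by (intro mult_left_mono) auto
      ultimately show ?thesis by linarith
    qed
  next
    case False
    show ?thesis
    proof (cases "0 \<le> V")
      case True
      have "G * V \<ge> B * V" using g True by (intro mult_right_mono) auto
      moreover have "B * V \<ge> B * A" using V \<open>A > 0 \<and> B < 0\<close> by (intro mult_left_mono_neg) auto
      ultimately show ?thesis by (simp add: mult.commute)
    next
      case f2: False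
      have "G * V > 0" using False f2 by (simp add: mult_neg_neg)
      moreover have "A * B < 0" using \<open>A > 0 \<and> B < 0\<close> by (simp add: mult_pos_neg)
      ultimately show ?thesis by linarith
    qed
  qed
  have "D * (1/2 * (A*X + B*Y) + G*P) = 1/2 * (A*A + B*B) + G * V"
    using D by (simp add: X Y V_def field_simps)
  also have "\<dots> \<ge> 1/2 * (A + B)^2" using GV by (simp add: power2_eq_square algebra_simps)
  finally have "D * (1/2 * (A*X + B*Y) + G*P) \<ge> 0"
    using zero_le_power2[of "A+B"] by linarith
  then show ?thesis using D by (simp add: zero_le_mult_iff)
next
  case False
  then have "X = 0" "Y = 0" using r by auto
  then show ?thesis using plo phi by auto
qed

theorem lemma4:
  fixes f :: "real^'n \<Rightarrow> real"
    and gradf :: "real^'n \<Rightarrow> real^'n"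
    and xstar :: "real^'n"
    and T :: "real set"
    and x y x' y' :: "real \<Rightarrow> real^'n"
  assumes nonneg: "\<forall>z\<in>cbox 0 1. f z \<ge> 0"
    and diff: "\<forall>z\<in>cbox 0 1. (f has_derivative (\<lambda>h. gradf z \<bullet> h)) (at z within cbox 0 1)"
    and dr: "dr_submodular f"
    and xstar_in: "xstar \<in> cbox 0 1"
    and xstar_max: "\<forall>z\<in>cbox 0 1. f z \<le> f xstar"
    and T_int: "is_interval T"
    and traj_box: "\<forall>s\<in>T. x s \<in> cbox 0 1 \<and> y s \<in> cbox 0 1"
    and traj_le: "\<forall>s\<in>T. x s \<le> y s"
    and x_deriv: "\<forall>s\<in>T. (x has_vector_derivative x' s) (at s within T)"
    and y_deriv: "\<forall>s\<in>T. (y has_vector_derivative y' s) (at s within T)"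
    and rule: "\<forall>s\<in>T. \<forall>i.
       (if gradf (x s) $ i > 0 \<and> gradf (y s) $ i < 0
        then x' s $ i = gradf (x s) $ i / (gradf (x s) $ i - gradf (y s) $ i)
           \<and> y' s $ i = gradf (y s) $ i / (gradf (x s) $ i - gradf (y s) $ i)
        else x' s $ i = 0 \<and> y' s $ i = 0)"
  shows "\<forall>t\<in>interior T. \<forall>p'.
           ((\<lambda>s. box_proj xstar (x s) (y s)) has_vector_derivative p') (at t) \<longrightarrow>
           (1/2) * (gradf (x t) \<bullet> x' t + gradf (y t) \<bullet> y' t)
             + gradf (box_proj xstar (x t) (y t)) \<bullet> p' \<ge> 0"
proof (intro ballI allI impI)
  fix t p'
  assume tI: "t \<in> interior T"
    and pd: "((\<lambda>s. box_proj xstar (x s) (y s)) has_vector_derivative p') (at t)"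
  have tT: "t \<in> T" using tI interior_subset by blast
  define p where "p = box_proj xstar (x t) (y t)"
  have xt: "x t \<in> cbox 0 1" and yt: "y t \<in> cbox 0 1" and xy: "x t \<le> y t"
    using traj_box traj_le tT by auto
  have pi: "p $ i = min (max (xstar $ i) (x t $ i)) (y t $ i)" for i
    by (simp add: p_def box_proj_def)
  have xp: "x t \<le> p" and py: "p \<le> y t"
    using xy by (auto simp: less_eq_vec_def pi)
  have pbox: "p \<in> cbox 0 1"
    using xt yt xp py unfolding mem_box_cart less_eq_vec_def by (meson order_trans)
  have g1: "gradf p $ i \<le> gradf (x t) $ i" for i
    by (rule grad_mono[OF diff dr xt pbox xp])
  have g2: "gradf (y t) $ i \<le> gradf p $ i" for i
    by (rule grad_mono[OF diff dr pbox yt py])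
  have xd: "(x has_vector_derivative x' t) (at t)"
    using x_deriv tT at_within_interior[OF tI] by metis
  have yd: "(y has_vector_derivative y' t) (at t)"
    using y_deriv tT at_within_interior[OF tI] by metis
  have pb: "min (min (x' t $ i) (y' t $ i)) 0 \<le> p' $ i \<and> p' $ i \<le> max (max (x' t $ i) (y' t $ i)) 0" for i
  proof -
    note lx = comp_lim[OF xd, of i] and ly = comp_lim[OF yd, of i] and lp = comp_lim[OF pd, of i]
    have ev: "eventually (\<lambda>s. s > t) (at_right t)"
      by (simp add: eventually_at_filter)
    have "min (min (x' t $ i) (y' t $ i)) 0 \<le> p' $ i"
    proof (rule tendsto_le[OF trivial_limit_at_right_real lp tendsto_min[OF tendsto_min[OF lx ly] tendsto_const]])
      show "\<forall>\<^sub>F s in at_right t. min (min ((x s $ i - x t $ i) / (s - t)) ((y s $ i - y t $ i) / (s - t))) 0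
          \<le> (box_proj xstar (x s) (y s) $ i - box_proj xstar (x t) (y t) $ i) / (s - t)"
        using ev by eventually_elim (auto simp: box_proj_def intro!: div_lo clamp_lo)
    qed
    moreover have "p' $ i \<le> max (max (x' t $ i) (y' t $ i)) 0"
    proof (rule tendsto_le[OF trivial_limit_at_right_real tendsto_max[OF tendsto_max[OF lx ly] tendsto_const] lp])
      show "\<forall>\<^sub>F s in at_right t. (box_proj xstar (x s) (y s) $ i - box_proj xstar (x t) (y t) $ i) / (s - t)
          \<le> max (max ((x s $ i - x t $ i) / (s - t)) ((y s $ i - y t $ i) / (s - t))) 0"
        using ev by eventually_elim (auto simp: box_proj_def intro!: div_hi clamp_hi)
    qed
    ultimately show ?thesis by blast
  qed
  have tnn: "0 \<le> 1/2 * (gradf (x t) $ i * x' t $ i + gradf (y t) $ i * y' t $ i) + gradf p $ i * p' $ i" for i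
    using rule tT g1[of i] g2[of i] pb[of i] by (intro coord) auto
  have "(1/2) * (gradf (x t) \<bullet> x' t + gradf (y t) \<bullet> y' t) + gradf p \<bullet> p'
      = (\<Sum>i\<in>UNIV. 1/2 * (gradf (x t) $ i * x' t $ i + gradf (y t) $ i * y' t $ i) + gradf p $ i * p' $ i)"
    by (simp add: inner_vec_def sum.distrib sum_distrib_left flip: sum_divide_distrib)
  also have "\<dots> \<ge> 0" by (intro sum_nonneg tnn)
  finally show "(1/2) * (gradf (x t) \<bullet> x' t + gradf (y t) \<bullet> y' t)
             + gradf (box_proj xstar (x t) (y t)) \<bullet> p' \<ge> 0" by (simp add: p_def)
qed

end
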